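(* Let $S_X,S_Y$ be finite nonempty action sets, $\lambda\in[0,1)$ and $\varphi:S_X\times S_Y\to\mathbb{R}$ additive. If $\varphi\equiv0$ is $\lambda$-enforceable by $X$, then $\varphi\equiv0$ is $\lambda$-enforceable by $X$ using a two-point reactive strategy, i.e., there exist $\tau_X^+,\tau_X^-\in\Delta(S_X)$, $p_0\in[0,1]$ and $p^*:S_Y\to[0,1]$ such that the strategy playing $p_0\tau_X^++(1-p_0)\tau_X^-$ in round $0$ and $p^*[s_Y]\tau_X^++(1-p^*[s_Y])\tau_X^-$ in round $t+1$ after $Y$ played $s_Y$ in round $t$ is $(\varphi,\lambda)$-autocratic.
   Context: Two players $X,Y$ play a repeated game with finite action sets $S_X,S_Y$; $\Delta(S)$ denotes the probability distributions on $S$. $\varphi$ is additive if $\varphi(s_X,s_Y)=\phi_X(s_X)+\phi_Y(s_Y)$ for some $\phi_X:S_X\to\mathbb{R}$, $\phi_Y:S_Y\to\mathbb{R}$. Histories: $\mathcal{H}=\bigcup_{T\ge0}(S_X\times S_Y)^T$; behavioral strategies are maps $\sigma:\mathcal{H}\to\Delta(S)$; players independently draw actions each round from their strategies evaluated at the history of realized action pairs, with $\mathbb{E}_{\sigma_X,\sigma_Y}$ the expectation over the resulting play. $\sigma_X$ is $(\varphi,\lambda)$-autocratic if for every behavioral strategy $\sigma_Y$ of $Y$, $\mathbb{E}_{\sigma_X,\sigma_Y}[(1-\lambda)\sum_{t\ge0}\lambda^t\varphi(s_X^t,s_Y^t)]=0$; $\varphi\equiv0$ is $\lambda$-enforceable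 by $X$ if such a behavioral strategy exists. *)

theory Defs
  imports "HOL-Probability.Probability_Mass_Function"
begin

text \<open>Action sets are finite types 'a (for X) and 'b (for Y); types are nonempty.
  A history is the list of realized action pairs in chronological order.\<close>

type_synonym ('a, 'b) history = "('a \<times> 'b) list"

definition additive :: "('a \<times> 'b \<Rightarrow> real) \<Rightarrow> bool" where
  "additive \<phi> \<longleftrightarrow> (\<exists>\<phi>X \<phi>Y. \<forall>sX sY. \<phi> (sX, sY) = \<phi>X sX + \<phi>Y sY)"

definition hist_prob ::
  "(('a, 'b) history \<Rightarrow> 'a pmf) \<Rightarrow> (('a, 'b) history \<Rightarrow> 'b pmf) \<Rightarrow> ('a, 'b) history \<Rightarrow> real" where
  "hist_prob \<sigma>X \<sigma>Y h =
     (\<Prod>i<length h. pmf (\<sigma>X (take i h)) (fst (h ! i)) * pmf (\<sigma>Y (take i h)) (snd (h ! i)))"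

definition stage_exp ::
  "(('a::finite, 'b::finite) history \<Rightarrow> 'a pmf) \<Rightarrow> (('a, 'b) history \<Rightarrow> 'b pmf)
     \<Rightarrow> ('a \<times> 'b \<Rightarrow> real) \<Rightarrow> nat \<Rightarrow> real" where
  "stage_exp \<sigma>X \<sigma>Y \<phi> t =
     (\<Sum>h\<in>{h :: ('a, 'b) history. length h = t}.
        hist_prob \<sigma>X \<sigma>Y h * (\<Sum>sX\<in>UNIV. \<Sum>sY\<in>UNIV. pmf (\<sigma>X h) sX * pmf (\<sigma>Y h) sY * \<phi> (sX, sY)))"

text \<open>Expected normalized discounted payoff
  E[(1-lam) * sum_t lam^t phi(s^t)] = (1-lam) * sum_t lam^t E[phi(s^t)] (phi bounded).\<close>
definition disc_payoff ::
  "(('a::finite, 'b::finite) history \<Rightarrow> 'a pmf) \<Rightarrow> (('a, 'b) history \<Rightarrow> 'b pmf)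
     \<Rightarrow> ('a \<times> 'b \<Rightarrow> real) \<Rightarrow> real \<Rightarrow> real" where
  "disc_payoff \<sigma>X \<sigma>Y \<phi> lam = (1 - lam) * (\<Sum>t. lam ^ t * stage_exp \<sigma>X \<sigma>Y \<phi> t)"

definition autocratic ::
  "(('a::finite, 'b::finite) history \<Rightarrow> 'a pmf) \<Rightarrow> ('a \<times> 'b \<Rightarrow> real) \<Rightarrow> real \<Rightarrow> bool" where
  "autocratic \<sigma>X \<phi> lam \<longleftrightarrow> (\<forall>\<sigma>Y :: ('a, 'b) history \<Rightarrow> 'b pmf. disc_payoff \<sigma>X \<sigma>Y \<phi> lam = 0)"

definition enforceable :: "('a::finite \<times> 'b::finite \<Rightarrow> real) \<Rightarrow> real \<Rightarrow> bool" where
  "enforceable \<phi> lam \<longleftrightarrow> (\<exists>\<sigma>X. autocratic \<sigma>X \<phi> lam)"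

definition mix_pmf :: "real \<Rightarrow> 'a pmf \<Rightarrow> 'a pmf \<Rightarrow> 'a pmf" where
  "mix_pmf p tp tm = bind_pmf (bernoulli_pmf p) (\<lambda>c. if c then tp else tm)"

definition two_point_reactive ::
  "'a pmf \<Rightarrow> 'a pmf \<Rightarrow> real \<Rightarrow> ('b \<Rightarrow> real) \<Rightarrow> ('a, 'b) history \<Rightarrow> 'a pmf" where
  "two_point_reactive tp tm p0 pstar h =
     (if h = [] then mix_pmf p0 tp tm else mix_pmf (pstar (snd (last h))) tp tm)"

end

theory Submission
  imports Defs
begin

lemma finite_hists: "finite {h :: ('a::finite \<times> 'b::finite) list. length h = t}"
  using finite_lists_length_eq[of "UNIV :: ('a \<times> 'b) set" t] by simp

lemma sum_hist_Suc:
  "(\<Sum>h\<in>{h :: ('a::finite \<times> 'b::finite) list. length h = Suc t}. F h) =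
   (\<Sum>h\<in>{h :: ('a \<times> 'b) list. length h = t}. \<Sum>x\<in>UNIV. \<Sum>y\<in>UNIV. F (h @ [(x, y)]))"
proof -
  let ?g = "\<lambda>(h :: ('a \<times> 'b) list, (x :: 'a, y :: 'b)). h @ [(x, y)]"
  have inj: "inj_on ?g ({h. length h = t} \<times> (UNIV \<times> UNIV))"
    by (auto simp: inj_on_def)
  have img: "?g ` ({h. length h = t} \<times> (UNIV \<times> UNIV)) = {h. length h = Suc t}"
  proof
    show "?g ` ({h. length h = t} \<times> (UNIV \<times> UNIV)) \<subseteq> {h. length h = Suc t}" by auto
  next
    show "{h. length h = Suc t} \<subseteq> ?g ` ({h. length h = t} \<times> (UNIV \<times> UNIV))"
    proof
      fix h :: "('a \<times> 'b) list" assume "h \<in> {h. length h = Suc t}"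
      then have l: "length h = Suc t" by simp
      then have "h \<noteq> []" by auto
      then have "h = butlast h @ [(fst (last h), snd (last h))]" by simp
      moreover have "length (butlast h) = t" using l by simp
      ultimately show "h \<in> ?g ` ({h. length h = t} \<times> (UNIV \<times> UNIV))"
        by (intro image_eqI[where x="(butlast h, fst (last h), snd (last h))"]) auto
    qed
  qed
  have "(\<Sum>h\<in>{h. length h = Suc t}. F h) = (\<Sum>p\<in>{h. length h = t} \<times> (UNIV \<times> UNIV). F (?g p))"
    using sum.reindex[OF inj, of F] img by simp
  also have "\<dots> = (\<Sum>h\<in>{h. length h = t}. \<Sum>q\<in>UNIV \<times> UNIV. F (?g (h, q)))"
    unfolding sum.cartesian_product by (rule sum.cong) auto
  also have "\<dots> = (\<Sum>h\<in>{h. length h = t}. \<Sum>x\<in>UNIV. \<Sum>y\<in>UNIV. F (h @ [(x, y)]))"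
    unfolding sum.cartesian_product by (rule sum.cong) auto
  finally show ?thesis .
qed

lemma hist_prob_snoc:
  "hist_prob sX sY (h @ [(x, y)]) = hist_prob sX sY h * (pmf (sX h) x * pmf (sY h) y)"
proof -
  have "hist_prob sX sY (h @ [(x, y)]) =
     (\<Prod>i<length h. pmf (sX (take i (h @ [(x, y)]))) (fst ((h @ [(x, y)]) ! i)) *
        pmf (sY (take i (h @ [(x, y)]))) (snd ((h @ [(x, y)]) ! i))) * (pmf (sX h) x * pmf (sY h) y)"
    unfolding hist_prob_def by (simp add: lessThan_Suc)
  also have "(\<Prod>i<length h. pmf (sX (take i (h @ [(x, y)]))) (fst ((h @ [(x, y)]) ! i)) *
        pmf (sY (take i (h @ [(x, y)]))) (snd ((h @ [(x, y)]) ! i))) = hist_prob sX sY h"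
    unfolding hist_prob_def by (rule prod.cong) (auto simp: nth_append)
  finally show ?thesis .
qed

lemma hist_prob_nonneg: "0 \<le> hist_prob sX sY h"
  unfolding hist_prob_def by (intro prod_nonneg) auto

lemma pmf_sum_UNIV: "(\<Sum>x\<in>(UNIV :: 'a::finite set). pmf p x) = 1"
  by (rule sum_pmf_eq_1) auto

lemma hist_prob_sum:
  "(\<Sum>h\<in>{h :: ('a::finite \<times> 'b::finite) list. length h = t}. hist_prob sX sY h) = 1"
proof (induction t)
  case 0
  have "{h :: ('a \<times> 'b) list. length h = 0} = {[]}" by auto
  then show ?case by (simp add: hist_prob_def)
next
  case (Suc t)
  have e: "(\<Sum>x\<in>UNIV. \<Sum>y\<in>UNIV. hist_prob sX sY h * (pmf (sX h) x * pmf (sY h) y)) = hist_prob sX sY h"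
    for h :: "('a \<times> 'b) list"
  proof -
    have "(\<Sum>x\<in>UNIV. \<Sum>y\<in>UNIV. hist_prob sX sY h * (pmf (sX h) x * pmf (sY h) y))
        = hist_prob sX sY h * ((\<Sum>x\<in>UNIV. pmf (sX h) x) * (\<Sum>y\<in>UNIV. pmf (sY h) y))"
      by (simp only: sum_distrib_right sum_distrib_left) (rule sum.swap)
    then show ?thesis by (simp add: pmf_sum_UNIV)
  qed
  have "(\<Sum>h\<in>{h :: ('a \<times> 'b) list. length h = Suc t}. hist_prob sX sY h)
     = (\<Sum>h\<in>{h :: ('a \<times> 'b) list. length h = t}. hist_prob sX sY h)"
    by (simp only: sum_hist_Suc hist_prob_snoc e)
  also have "\<dots> = 1" using Suc by simp
  finally show ?case .
qed

lemma wavg: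
  assumes "finite S" "\<forall>x\<in>S. 0 \<le> w x" "sum w S = 1" "\<forall>x\<in>S. lo \<le> g x \<and> g x \<le> (hi::real)"
  shows "lo \<le> (\<Sum>x\<in>S. w x * g x) \<and> (\<Sum>x\<in>S. w x * g x) \<le> hi"
proof
  have "lo = (\<Sum>x\<in>S. w x * lo)" using assms(3) by (simp add: sum_distrib_right[symmetric])
  also have "\<dots> \<le> (\<Sum>x\<in>S. w x * g x)"
    by (rule sum_mono) (use assms in \<open>auto intro: mult_left_mono\<close>)
  finally show "lo \<le> (\<Sum>x\<in>S. w x * g x)" .
  have "(\<Sum>x\<in>S. w x * g x) \<le> (\<Sum>x\<in>S. w x * hi)"
    by (rule sum_mono) (use assms in \<open>auto intro: mult_left_mono\<close>)
  also have "\<dots> = hi" using assms(3) by (simp add: sum_distrib_right[symmetric])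
  finally show "(\<Sum>x\<in>S. w x * g x) \<le> hi" .
qed

definition ev :: "'c::finite pmf \<Rightarrow> ('c \<Rightarrow> real) \<Rightarrow> real" where
  "ev p f = (\<Sum>x\<in>UNIV. pmf p x * f x)"

lemma ev_bounds:
  assumes "\<forall>x. lo \<le> f x \<and> f x \<le> hi"
  shows "lo \<le> ev p f \<and> ev p f \<le> hi"
  unfolding ev_def by (rule wavg) (use assms in \<open>auto simp: pmf_sum_UNIV\<close>)

lemma hist_bounds:
  assumes "\<forall>h. length h = t \<longrightarrow> lo \<le> g h \<and> g h \<le> hi"
  shows "lo \<le> (\<Sum>h\<in>{h :: ('a::finite \<times> 'b::finite) list. length h = t}. hist_prob sX sY h * g h)
     \<and> (\<Sum>h\<in>{h :: ('a \<times> 'b) list. length h = t}. hist_prob sX sY h * g h) \<le> hi"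
  by (rule wavg) (use assms in \<open>auto simp: finite_hists hist_prob_nonneg hist_prob_sum\<close>)

lemma stage_add:
  assumes "\<forall>sX sY. \<phi> (sX, sY) = \<phi>X sX + \<phi>Y sY"
  shows "stage_exp \<sigma>X \<sigma>Y \<phi> t = (\<Sum>h\<in>{h. length h = t}.
            hist_prob \<sigma>X \<sigma>Y h * (ev (\<sigma>X h) \<phi>X + ev (\<sigma>Y h) \<phi>Y))"
  unfolding stage_exp_def
proof (rule sum.cong[OF refl])
  fix h
  let ?pX = "pmf (\<sigma>X h)" and ?pY = "pmf (\<sigma>Y h)"
  have "(\<Sum>sX\<in>UNIV. \<Sum>sY\<in>UNIV. ?pX sX * ?pY sY * \<phi> (sX, sY))
     = (\<Sum>sX\<in>UNIV. \<Sum>sY\<in>UNIV. ?pX sX * \<phi>X sX * ?pY sY)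
       + (\<Sum>sX\<in>UNIV. ?pX sX * (\<Sum>sY\<in>UNIV. ?pY sY * \<phi>Y sY))"
    by (simp add: assms sum.distrib sum_distrib_left algebra_simps)
  also have "(\<Sum>sX\<in>UNIV. \<Sum>sY\<in>UNIV. ?pX sX * \<phi>X sX * ?pY sY) = ev (\<sigma>X h) \<phi>X"
    by (simp add: sum_distrib_left[symmetric] pmf_sum_UNIV ev_def)
  also have "(\<Sum>sX\<in>UNIV. ?pX sX * (\<Sum>sY\<in>UNIV. ?pY sY * \<phi>Y sY)) = ev (\<sigma>Y h) \<phi>Y"
    by (simp add: sum_distrib_right[symmetric] pmf_sum_UNIV ev_def)
  finally show "hist_prob \<sigma>X \<sigma>Y h * (\<Sum>sX\<in>UNIV. \<Sum>sY\<in>UNIV. ?pX sX * ?pY sY * \<phi> (sX, sY))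
     = hist_prob \<sigma>X \<sigma>Y h * (ev (\<sigma>X h) \<phi>X + ev (\<sigma>Y h) \<phi>Y)" by simp
qed

lemma ev_return: "ev (return_pmf c) f = f c"
  unfolding ev_def by (simp add: indicator_def)

lemma pmf_mix:
  assumes "0 \<le> p" "p \<le> 1"
  shows "pmf (mix_pmf p tp tm) x = p * pmf tp x + (1 - p) * pmf tm x"
  unfolding mix_pmf_def pmf_bind
  by (subst integral_measure_pmf[where A="UNIV"]) (use assms in \<open>auto simp: UNIV_bool\<close>)

lemma ev_mix:
  assumes "0 \<le> p" "p \<le> 1"
  shows "ev (mix_pmf p tp tm) f = p * ev tp f + (1 - p) * ev tm f"
proof -
  have "ev (mix_pmf p tp tm) f = (\<Sum>x\<in>UNIV. p * (pmf tp x * f x) + (1 - p) * (pmf tm x * f x))"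
    unfolding ev_def pmf_mix[OF assms] by (rule sum.cong) (auto simp: algebra_simps)
  also have "\<dots> = p * ev tp f + (1 - p) * ev tm f"
    unfolding ev_def by (simp add: sum.distrib sum_distrib_left)
  finally show ?thesis .
qed

lemma summable_bounded:
  fixes s :: "nat \<Rightarrow> real"
  assumes "0 \<le> lam" "lam < 1" "\<forall>t. \<bar>s t\<bar> \<le> K"
  shows "summable (\<lambda>t. lam ^ t * s t)"
proof (rule summable_comparison_test)
  show "\<exists>N. \<forall>n\<ge>N. norm (lam ^ n * s n) \<le> K * lam ^ n"
  proof (intro exI allI impI)
    fix n :: nat
    have "\<bar>s n\<bar> * lam ^ n \<le> K * lam ^ n"
      using assms by (intro mult_right_mono) auto
    then show "norm (lam ^ n * s n) \<le> K * lam ^ n"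
      using assms by (simp add: abs_mult mult.commute)
  qed
  show "summable (\<lambda>n. K * lam ^ n)"
    using assms by (intro summable_mult summable_geometric) auto
qed

lemma geo_const:
  assumes "0 \<le> lam" "lam < (1::real)"
  shows "(\<Sum>t. lam ^ t * c) = c / (1 - lam)" "summable (\<lambda>t. lam ^ t * c)"
proof -
  have "(\<lambda>t. lam ^ t) sums (1 / (1 - lam))" using assms by (intro geometric_sums) auto
  then have "(\<lambda>t. lam ^ t * c) sums (1 / (1 - lam) * c)" by (rule sums_mult2)
  then show "(\<Sum>t. lam ^ t * c) = c / (1 - lam)" "summable (\<lambda>t. lam ^ t * c)"
    by (auto simp: sums_iff)
qed

lemma hists0: "{h :: ('a \<times> 'b) list. length h = 0} = {[]}" by auto

lemma nec:
  fixes \<phi> :: "'a::finite \<times> 'b::finite \<Rightarrow> real" and \<sigma>X :: "('a, 'b) history \<Rightarrow> 'a pmf"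
  assumes add: "\<forall>sX sY. \<phi> (sX, sY) = \<phi>X sX + \<phi>Y sY" and lam: "0 \<le> lam" "lam < 1"
    and bnd: "\<forall>x. a \<le> \<phi>X x \<and> \<phi>X x \<le> b"
    and dp: "disc_payoff \<sigma>X (\<lambda>h. return_pmf (if h = [] then y0 else z)) \<phi> lam = 0"
  shows "(1 - lam) * (ev (\<sigma>X []) \<phi>X + \<phi>Y y0) + lam * (a + \<phi>Y z) \<le> 0 \<and>
         0 \<le> (1 - lam) * (ev (\<sigma>X []) \<phi>X + \<phi>Y y0) + lam * (b + \<phi>Y z)"
proof -
  define \<sigma>Y where "\<sigma>Y = (\<lambda>h::('a, 'b) history. return_pmf (if h = [] then y0 else z))"
  define s where "s = stage_exp \<sigma>X \<sigma>Y \<phi>"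
  have evX: "a \<le> ev (\<sigma>X h) \<phi>X \<and> ev (\<sigma>X h) \<phi>X \<le> b" for h
    by (rule ev_bounds) (use bnd in auto)
  have s0: "s 0 = ev (\<sigma>X []) \<phi>X + \<phi>Y y0"
    unfolding s_def stage_add[OF add] hists0 by (simp add: hist_prob_def \<sigma>Y_def ev_return)
  have sS: "a + \<phi>Y z \<le> s (Suc t) \<and> s (Suc t) \<le> b + \<phi>Y z" for t
    unfolding s_def stage_add[OF add]
    by (rule hist_bounds) (use evX in \<open>auto simp: \<sigma>Y_def ev_return\<close>)
  define K where "K = \<bar>a\<bar> + \<bar>b\<bar> + \<bar>\<phi>Y y0\<bar> + \<bar>\<phi>Y z\<bar>"
  have sb: "\<forall>t. \<bar>s t\<bar> \<le> K"
  proof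
    fix t show "\<bar>s t\<bar> \<le> K"
    proof (cases t)
      case 0 then show ?thesis using s0 evX[of "[]"] unfolding K_def by auto
    next
      case (Suc n) then show ?thesis using sS[of n] unfolding K_def by auto
    qed
  qed
  have sum1: "summable (\<lambda>t. lam ^ t * s t)" by (rule summable_bounded[OF lam sb])
  have sum2: "summable (\<lambda>t. lam ^ t * s (Suc t))" by (rule summable_bounded[OF lam]) (use sb in auto)
  define S where "S = (\<Sum>t. lam ^ t * s (Suc t))"
  have split: "(\<Sum>t. lam ^ t * s t) = s 0 + lam * S"
  proof -
    have "(\<Sum>t. lam ^ Suc t * s (Suc t)) = (\<Sum>t. lam ^ t * s t) - lam ^ 0 * s 0"
      by (rule suminf_split_head[OF sum1])
    moreover have "(\<Sum>t. lam ^ Suc t * s (Suc t)) = lam * S"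
      unfolding S_def using suminf_mult[OF sum2, of lam] by (simp add: mult.assoc)
    ultimately show ?thesis by simp
  qed
  have SL: "(a + \<phi>Y z) / (1 - lam) \<le> S"
  proof -
    have "(\<Sum>t. lam ^ t * (a + \<phi>Y z)) \<le> S"
      unfolding S_def
      by (rule suminf_le) (use sS lam geo_const[OF lam] sum2 in \<open>auto intro: mult_left_mono\<close>)
    then show ?thesis using geo_const[OF lam] by simp
  qed
  have SU: "S \<le> (b + \<phi>Y z) / (1 - lam)"
  proof -
    have "S \<le> (\<Sum>t. lam ^ t * (b + \<phi>Y z))"
      unfolding S_def
      by (rule suminf_le) (use sS lam geo_const[OF lam] sum2 in \<open>auto intro: mult_left_mono\<close>)
    then show ?thesis using geo_const[OF lam] by simp
  qed
  have eq: "(1 - lam) * (s 0 + lam * S) = 0"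
    using dp split unfolding disc_payoff_def s_def \<sigma>Y_def by simp
  have L: "a + \<phi>Y z \<le> (1 - lam) * S" using SL lam by (simp add: field_simps)
  have U: "(1 - lam) * S \<le> b + \<phi>Y z" using SU lam by (simp add: field_simps)
  have "lam * (a + \<phi>Y z) \<le> lam * ((1 - lam) * S)" using L lam by (intro mult_left_mono) auto
  moreover have "lam * ((1 - lam) * S) \<le> lam * (b + \<phi>Y z)" using U lam by (intro mult_left_mono) auto
  moreover have "(1 - lam) * s 0 + lam * ((1 - lam) * S) = 0" using eq by (simp add: algebra_simps)
  ultimately show ?thesis using s0 by (simp add: algebra_simps)
qed

lemma abs_hist:
  assumes "\<forall>h. \<bar>g h\<bar> \<le> K"
  shows "\<bar>(\<Sum>h\<in>{h :: ('a::finite \<times> 'b::finite) list. length h = t}. hist_prob sX sY h * g h)\<bar> \<le> K"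
proof -
  have "\<forall>h. length h = t \<longrightarrow> -K \<le> g h \<and> g h \<le> K" using assms by (metis abs_le_D1 abs_le_D2 minus_le_iff)
  from hist_bounds[OF this, of sX sY] show ?thesis by (simp add: abs_le_iff)
qed

lemma abs_ev:
  assumes "\<forall>x. \<bar>f x\<bar> \<le> K"
  shows "\<bar>ev p f\<bar> \<le> K"
proof -
  have "\<forall>x. -K \<le> f x \<and> f x \<le> K" using assms by (metis abs_le_D1 abs_le_D2 minus_le_iff)
  from ev_bounds[OF this, of p] show ?thesis by (simp add: abs_le_iff)
qed

lemma abs_conv:
  assumes "0 \<le> p" "p \<le> 1"
  shows "\<bar>p * u + (1 - p) * v\<bar> \<le> \<bar>u\<bar> + \<bar>(v::real)\<bar>"
proof -
  have "\<bar>p * u\<bar> \<le> \<bar>u\<bar>" using assms by (simp add: abs_mult mult_left_le_one_le)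
  moreover have "\<bar>(1 - p) * v\<bar> \<le> \<bar>v\<bar>" using assms by (simp add: abs_mult mult_left_le_one_le)
  ultimately show ?thesis by (meson abs_triangle_ineq add_mono order_trans)
qed

lemma ev_lin: "ev p f + lam * ev p g = ev p (\<lambda>y. f y + lam * g y)"
  unfolding ev_def by (simp add: sum.distrib sum_distrib_left algebra_simps)

lemma ev_const: "ev p (\<lambda>_. c) = c"
  unfolding ev_def by (simp add: sum_distrib_right[symmetric] pmf_sum_UNIV)

lemma suff:
  fixes \<phi> :: "'a::finite \<times> 'b::finite \<Rightarrow> real"
  assumes add: "\<forall>sX sY. \<phi> (sX, sY) = \<phi>X sX + \<phi>Y sY" and lam: "0 \<le> lam" "lam < 1"
    and p0: "0 \<le> p0" "p0 \<le> 1" and ps: "\<forall>y. 0 \<le> ps y \<and> ps y \<le> 1"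
    and key: "\<forall>y. \<phi>Y y + lam * (ps y * \<phi>X xb + (1 - ps y) * \<phi>X xa) = c"
    and init: "(1 - lam) * (p0 * \<phi>X xb + (1 - p0) * \<phi>X xa) + c = 0"
  shows "autocratic (two_point_reactive (return_pmf xb) (return_pmf xa) p0 ps) \<phi> lam"
  unfolding autocratic_def
proof
  fix \<sigma>Y :: "('a, 'b) history \<Rightarrow> 'b pmf"
  define \<sigma> where "\<sigma> = two_point_reactive (return_pmf xb) (return_pmf xa) p0 ps"
  define e where "e = (\<lambda>p. p * \<phi>X xb + (1 - p) * \<phi>X xa)"
  have ev\<sigma>: "ev (\<sigma> h) \<phi>X = (if h = [] then e p0 else e (ps (snd (last h))))" for h
    unfolding \<sigma>_def two_point_reactive_def e_def using p0 ps
    by (auto simp: ev_mix ev_return)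
  define hp where "hp = hist_prob \<sigma> \<sigma>Y"
  define A where "A = (\<lambda>t. \<Sum>h\<in>{h :: ('a, 'b) history. length h = t}. hp h * ev (\<sigma>Y h) \<phi>Y)"
  define B where "B = (\<lambda>t. \<Sum>h\<in>{h :: ('a, 'b) history. length h = t}. hp h * ev (\<sigma>Y h) (\<lambda>y. e (ps y)))"
  define XX where "XX = (\<lambda>t. \<Sum>h\<in>{h :: ('a, 'b) history. length h = t}. hp h * ev (\<sigma> h) \<phi>X)"
  define s where "s = stage_exp \<sigma> \<sigma>Y \<phi>"
  have sAX: "s t = XX t + A t" for t
    unfolding s_def stage_add[OF add] XX_def A_def hp_def
    by (simp add: sum.distrib distrib_left)
  have XX0: "XX 0 = e p0"
    unfolding XX_def hists0 hp_def by (simp add: hist_prob_def ev\<sigma>)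
  have XXS: "XX (Suc t) = B t" for t
  proof -
    have "XX (Suc t) = (\<Sum>h\<in>{h :: ('a, 'b) history. length h = t}. \<Sum>x\<in>UNIV. \<Sum>y\<in>UNIV.
             hp h * (pmf (\<sigma> h) x * pmf (\<sigma>Y h) y) * e (ps y))"
      unfolding XX_def sum_hist_Suc hp_def hist_prob_snoc by (simp add: ev\<sigma>)
    also have "\<dots> = B t"
      unfolding B_def
    proof (rule sum.cong[OF refl])
      fix h :: "('a, 'b) history"
      have "(\<Sum>x\<in>UNIV. \<Sum>y\<in>UNIV. hp h * (pmf (\<sigma> h) x * pmf (\<sigma>Y h) y) * e (ps y))
          = (\<Sum>x\<in>UNIV. pmf (\<sigma> h) x * (hp h * (\<Sum>y\<in>UNIV. pmf (\<sigma>Y h) y * e (ps y))))"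
        by (simp add: sum_distrib_left mult_ac)
      also have "\<dots> = hp h * ev (\<sigma>Y h) (\<lambda>y. e (ps y))"
        unfolding ev_def by (simp add: sum_distrib_right[symmetric] pmf_sum_UNIV)
      finally show "(\<Sum>x\<in>UNIV. \<Sum>y\<in>UNIV. hp h * (pmf (\<sigma> h) x * pmf (\<sigma>Y h) y) * e (ps y))
          = hp h * ev (\<sigma>Y h) (\<lambda>y. e (ps y))" .
    qed
    finally show ?thesis .
  qed
  have ABc: "A t + lam * B t = c" for t
  proof -
    have "A t + lam * B t = (\<Sum>h\<in>{h :: ('a, 'b) history. length h = t}.
            hp h * (ev (\<sigma>Y h) \<phi>Y + lam * ev (\<sigma>Y h) (\<lambda>y. e (ps y))))"
      unfolding A_def B_def by (simp add: sum.distrib sum_distrib_left algebra_simps)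
    also have "\<dots> = (\<Sum>h\<in>{h :: ('a, 'b) history. length h = t}. hp h * c)"
    proof (rule sum.cong[OF refl])
      fix h
      have "ev (\<sigma>Y h) \<phi>Y + lam * ev (\<sigma>Y h) (\<lambda>y. e (ps y)) = ev (\<sigma>Y h) (\<lambda>_. c)"
        unfolding ev_lin using key unfolding e_def by simp
      then show "hp h * (ev (\<sigma>Y h) \<phi>Y + lam * ev (\<sigma>Y h) (\<lambda>y. e (ps y))) = hp h * c"
        by (simp add: ev_const)
    qed
    also have "\<dots> = c" unfolding hp_def by (simp add: sum_distrib_right[symmetric] hist_prob_sum)
    finally show ?thesis .
  qed
  define KA where "KA = (\<Sum>y\<in>UNIV. \<bar>\<phi>Y y\<bar>)"
  have bA: "\<forall>t. \<bar>A t\<bar> \<le> KA"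
    unfolding A_def hp_def
    by (intro allI abs_hist allI abs_ev) (auto simp: KA_def intro: member_le_sum)
  have bB: "\<forall>t. \<bar>B t\<bar> \<le> \<bar>\<phi>X xb\<bar> + \<bar>\<phi>X xa\<bar>"
    unfolding B_def hp_def
    by (intro allI abs_hist allI abs_ev) (use ps in \<open>auto simp: e_def intro: abs_conv\<close>)
  define SA where "SA = (\<Sum>t. lam ^ t * A t)"
  define SB where "SB = (\<Sum>t. lam ^ t * B t)"
  have sA: "(\<lambda>t. lam ^ t * A t) sums SA"
    unfolding SA_def by (rule summable_sums, rule summable_bounded[OF lam bA])
  have sB: "(\<lambda>t. lam ^ t * B t) sums SB"
    unfolding SB_def by (rule summable_sums, rule summable_bounded[OF lam bB])
  have "(\<lambda>t. lam ^ t * A t + lam * (lam ^ t * B t)) sums (SA + lam * SB)"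
    by (intro sums_add sums_mult sA sB)
  moreover have "(\<lambda>t. lam ^ t * A t + lam * (lam ^ t * B t)) = (\<lambda>t. lam ^ t * c)"
  proof
    fix t
    have "lam ^ t * A t + lam * (lam ^ t * B t) = lam ^ t * (A t + lam * B t)"
      by (simp add: algebra_simps)
    then show "lam ^ t * A t + lam * (lam ^ t * B t) = lam ^ t * c" using ABc[of t] by simp
  qed
  ultimately have "(\<lambda>t. lam ^ t * c) sums (SA + lam * SB)" by simp
  then have cSAB: "SA + lam * SB = c / (1 - lam)"
    using geo_const[OF lam] sums_unique by metis
  have "(\<lambda>t. lam ^ Suc t * XX (Suc t)) sums (lam * SB)"
  proof -
    have "(\<lambda>t. lam * (lam ^ t * B t)) sums (lam * SB)" by (intro sums_mult sB)
    moreover have "(\<lambda>t. lam ^ Suc t * XX (Suc t)) = (\<lambda>t. lam * (lam ^ t * B t))"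
      by (auto simp: XXS intro!: ext)
    ultimately show ?thesis by simp
  qed
  then have sX: "(\<lambda>t. lam ^ t * XX t) sums (lam * SB + e p0)"
    by (subst (asm) sums_Suc_iff) (simp add: XX0)
  have "(\<lambda>t. lam ^ t * A t + lam ^ t * XX t) sums (SA + (lam * SB + e p0))"
    by (intro sums_add sA sX)
  moreover have "(\<lambda>t. lam ^ t * A t + lam ^ t * XX t) = (\<lambda>t. lam ^ t * s t)"
    by (auto simp: sAX algebra_simps intro!: ext)
  ultimately have "(\<Sum>t. lam ^ t * s t) = c / (1 - lam) + e p0"
    using cSAB sums_unique by (metis add.assoc add.commute)
  then have "disc_payoff \<sigma> \<sigma>Y \<phi> lam = (1 - lam) * (c / (1 - lam) + e p0)"
    unfolding disc_payoff_def s_def by simp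
  also have "\<dots> = 0" using lam init unfolding e_def by (simp add: field_simps)
  finally show "disc_payoff (two_point_reactive (return_pmf xb) (return_pmf xa) p0 ps) \<sigma>Y \<phi> lam = 0"
    unfolding \<sigma>_def .
qed

lemma ex_min_fin: "\<exists>x0::'c::finite. \<forall>x. (f x0 :: real) \<le> f x"
proof -
  have "Min (range f) \<in> range f" by (rule Min_in) auto
  then obtain x0 where x0: "Min (range f) = f x0" by (rule rangeE)
  show ?thesis by (rule exI[of _ x0]) (simp add: x0[symmetric])
qed

lemma ex_max_fin: "\<exists>x0::'c::finite. \<forall>x. f x \<le> (f x0 :: real)"
proof -
  have "Max (range f) \<in> range f" by (rule Max_in) auto
  then obtain x0 where x0: "Max (range f) = f x0" by (rule rangeE)
  show ?thesis by (rule exI[of _ x0]) (simp add: x0[symmetric])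
qed

theorem corollary2:
  fixes \<phi> :: "'a::finite \<times> 'b::finite \<Rightarrow> real" and lam :: real
  assumes "0 \<le> lam" and "lam < 1" and "additive \<phi>" and "enforceable \<phi> lam"
  shows "\<exists>(tp :: 'a pmf) (tm :: 'a pmf) (p0 :: real) (pstar :: 'b \<Rightarrow> real).
           p0 \<in> {0..1} \<and> (\<forall>sY. pstar sY \<in> {0..1}) \<and>
           autocratic (two_point_reactive tp tm p0 pstar) \<phi> lam"
proof -
  note lam = assms(1,2)
  obtain \<phi>X \<phi>Y where add: "\<forall>sX sY. \<phi> (sX, sY) = \<phi>X sX + \<phi>Y sY"
    using assms(3) unfolding additive_def by blast
  obtain \<sigma>X where aut: "autocratic \<sigma>X \<phi> lam" using assms(4) unfolding enforceable_def by blast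
  obtain xa where xa: "\<forall>x. \<phi>X xa \<le> \<phi>X x" using ex_min_fin by blast
  obtain xb where xb: "\<forall>x. \<phi>X x \<le> \<phi>X xb" using ex_max_fin by blast
  obtain ym where ym: "\<forall>y. \<phi>Y ym \<le> \<phi>Y y" using ex_min_fin by blast
  obtain yM where yM: "\<forall>y. \<phi>Y y \<le> \<phi>Y yM" using ex_max_fin by blast
  define a where "a = \<phi>X xa"
  define b where "b = \<phi>X xb"
  define m where "m = \<phi>Y ym"
  define M where "M = \<phi>Y yM"
  have bnd: "\<forall>x. a \<le> \<phi>X x \<and> \<phi>X x \<le> b" using xa xb a_def b_def by auto
  have ab: "a \<le> b" using bnd by auto
  have mM: "\<forall>y. m \<le> \<phi>Y y \<and> \<phi>Y y \<le> M" using ym yM m_def M_def by auto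
  define e0 where "e0 = ev (\<sigma>X []) \<phi>X"
  have e0: "a \<le> e0 \<and> e0 \<le> b" unfolding e0_def by (rule ev_bounds[OF bnd])
  have n1: "(1 - lam) * (e0 + M) + lam * (a + M) \<le> 0"
    using nec[OF add lam bnd, of \<sigma>X yM yM] aut unfolding autocratic_def e0_def M_def by blast
  have n2: "0 \<le> (1 - lam) * (e0 + m) + lam * (b + m)"
    using nec[OF add lam bnd, of \<sigma>X ym ym] aut unfolding autocratic_def e0_def m_def by blast
  have C1: "M - m \<le> lam * (b - a)"
    using n1 n2 by (simp add: algebra_simps)
  have "(1 - lam) * a \<le> (1 - lam) * e0" using e0 lam by (intro mult_left_mono) auto
  then have C2: "M + a \<le> 0" using n1 by (simp add: algebra_simps)
  have "(1 - lam) * e0 \<le> (1 - lam) * b" using e0 lam by (intro mult_left_mono) auto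
  then have C3: "0 \<le> m + b" using n2 by (simp add: algebra_simps)
  have ab': "(1 - lam) * a \<le> (1 - lam) * b" using ab lam by (intro mult_left_mono) auto
  define c where "c = max (M + lam * a) (-((1 - lam) * b))"
  have c1: "M + lam * a \<le> c" "-((1 - lam) * b) \<le> c" unfolding c_def by auto
  have c2: "c \<le> m + lam * b" unfolding c_def using C1 C3 by (auto simp: algebra_simps)
  have c3: "c \<le> -((1 - lam) * a)" unfolding c_def using C2 ab' by (auto simp: algebra_simps)
  define p0 where "p0 = (if b = a then 0 else (-c / (1 - lam) - a) / (b - a))"
  define ps where "ps = (\<lambda>y. if lam * (b - a) = 0 then 0 else (c - \<phi>Y y - lam * a) / (lam * (b - a)))"
  have p0b: "0 \<le> p0 \<and> p0 \<le> 1" and init: "(1 - lam) * (p0 * b + (1 - p0) * a) + c = 0"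
  proof -
    have "0 \<le> p0 \<and> p0 \<le> 1 \<and> (1 - lam) * (p0 * b + (1 - p0) * a) + c = 0"
    proof (cases "b = a")
      case True
      then have "c = -((1 - lam) * a)" using c1 c3 by auto
      then show ?thesis using True unfolding p0_def by simp
    next
      case False
      then have ba: "b - a > 0" using ab by simp
      define q where "q = -c / (1 - lam)"
      have "a * (1 - lam) \<le> -c" using c3 by (simp add: algebra_simps)
      then have qa: "a \<le> q" unfolding q_def using pos_le_divide_eq[of "1 - lam" a "-c"] lam by simp
      have "-c \<le> b * (1 - lam)" using c1 by (simp add: algebra_simps)
      then have qb: "q \<le> b" unfolding q_def using pos_divide_le_eq[of "1 - lam" "-c" b] lam by simp
      have p0q: "p0 = (q - a) / (b - a)" unfolding p0_def q_def using False by simp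
      have "p0 * (b - a) = q - a" unfolding p0q using ba by simp
      moreover have "p0 * b + (1 - p0) * a = a + p0 * (b - a)" by (simp add: algebra_simps)
      ultimately have "p0 * b + (1 - p0) * a = q" by simp
      moreover have "(1 - lam) * q + c = 0" unfolding q_def using lam by simp
      moreover have "0 \<le> p0" unfolding p0q using qa ba by simp
      moreover have "p0 \<le> 1" unfolding p0q using qb ba by simp
      ultimately show ?thesis by simp
    qed
    then show "0 \<le> p0 \<and> p0 \<le> 1" "(1 - lam) * (p0 * b + (1 - p0) * a) + c = 0" by auto
  qed
  have psb: "\<forall>y. 0 \<le> ps y \<and> ps y \<le> 1" and key: "\<forall>y. \<phi>Y y + lam * (ps y * b + (1 - ps y) * a) = c"
  proof -
    have "0 \<le> ps y \<and> ps y \<le> 1 \<and> \<phi>Y y + lam * (ps y * b + (1 - ps y) * a) = c" for y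
    proof (cases "lam * (b - a) = 0")
      case True
      then have "lam * b = lam * a" by (simp add: algebra_simps)
      then have "c = \<phi>Y y + lam * a" using c1 c2 C1 True mM[rule_format, of y] by auto
      then show ?thesis using True unfolding ps_def by simp
    next
      case False
      have pos: "lam * (b - a) > 0" using False lam ab by (simp add: less_le)
      have psy: "ps y = (c - \<phi>Y y - lam * a) / (lam * (b - a))" unfolding ps_def using False by simp
      have "\<phi>Y y + lam * (ps y * b + (1 - ps y) * a) = \<phi>Y y + lam * a + ps y * (lam * (b - a))"
        by (simp add: algebra_simps)
      also have "\<dots> = c"
      proof -
        have gen: "\<And>d x. d \<noteq> 0 \<Longrightarrow> x / d * d = (x::real)" by simp
        show ?thesis unfolding psy using gen[of "lam * (b - a)" "c - \<phi>Y y - lam * a"] pos by auto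
      qed
      finally have k: "\<phi>Y y + lam * (ps y * b + (1 - ps y) * a) = c" .
      have "0 \<le> c - \<phi>Y y - lam * a" using c1(1) mM[rule_format, of y] by linarith
      then have "0 \<le> ps y" unfolding psy using pos by simp
      moreover have "c - \<phi>Y y - lam * a \<le> lam * (b - a)" using c2 mM[rule_format, of y]
        by (simp add: algebra_simps)
      then have "ps y \<le> 1" unfolding psy using pos by simp
      ultimately show ?thesis using k by simp
    qed
    then show "\<forall>y. 0 \<le> ps y \<and> ps y \<le> 1" "\<forall>y. \<phi>Y y + lam * (ps y * b + (1 - ps y) * a) = c"
      by auto
  qed
  have "autocratic (two_point_reactive (return_pmf xb) (return_pmf xa) p0 ps) \<phi> lam"
    by (rule suff[OF add lam]) (use p0b psb key init a_def b_def in auto)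
  then show ?thesis using p0b psb by auto
qed

end
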